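(* Let $G=(N,E)$ be a DAG and write $L=\mathrm{leaves}(G)$. (a) Let $G'=(N,E')$ be a DAG satisfying Goal I for $G$, and let $\mathcal{O}'$ be a topological ordering of $G'$. Then $\tilde G'=(N,E'\cup E_L)$, where $E_L=\{(s,t): s,t\in L,\ \mathcal{O}'(s)<\mathcal{O}'(t)\}$, satisfies Goal II for $G$. (b) Let $G'=(N,E')$ be a DAG satisfying Goal II for $G$. Then $\tilde G'=(N,E'\setminus E_L)$, where $E_L=\{(s,t)\in E': s,t\in L\}$, satisfies Goal I for $G$.
   Context: DAG: finite directed graph without directed cycles; $\mathrm{pa}_G(s)$, $\mathrm{ch}_G(s)$ are the parents/children of $s$; $\mathrm{leaves}(G)=\{s:\mathrm{ch}_G(s)=\emptyset\}$, $\mathrm{roots}(G)=\{s:\mathrm{pa}_G(s)=\emptyset\}$. A topological ordering is a bijection $\mathcal{O}:N\to\{1,\dots,|N|\}$ with $(s,t)\in E\Rightarrow\mathcal{O}(s)<\mathcal{O}(t)$. Each node $s$ has a state space $\mathsf{X}_s$ (finite set with counting measure, or finite-dimensional real vector space with Lebesgue measure $\mu_s$), $\mathsf{X}_A=\times_{s\in A}\mathsf{X}_s$, $\mu=\otimes_s\mu_s$. A kernel function for $s$ in $G$ is a measurable $k^s:\mathsf{X}_s\times\mathsf{X}_{\mathrm{pa}_G(s)}\to\mathbb{R}_{\ge0}$ integrating to $1$ in $x_s$ w.r.t. $\mu_s$. $\mathcal{P}^G$ = set of probability distributions on $\mathsf{X}_N$ with a $\mu$-density $p(x)=\prod_{s\in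 N}k^s(x_s\mid x_{\mathrm{pa}_G(s)})$. For $A\subseteq N$ such that all parents in $G$ of nodes of $A$ lie in $A$, $\mathcal{K}^G$ is the set of Markov kernels $K$ from $\mathsf{X}_A$ to $\mathsf{X}_{N\setminus A}$ such that there are kernel functions $(k^s)_{s\in N\setminus A}$ with $K(\cdot,x_A)$ having density $p(x_{N\setminus A}\mid x_A)=\prod_{s\in N\setminus A}k^s(x_s\mid x_{\mathrm{pa}_G(s)})$ for every $x_A$. A Markov kernel $K$ is a version of the conditional distribution $P_{N\setminus A\mid A}$ if $P_{N}(\mathsf{B}\times\mathsf{C})=\int_{\mathsf{C}}K(\mathsf{B},x_A)\,dP_A(x_A)$ for all measurable $\mathsf{B}\subseteq\mathsf{X}_{N\setminus A}$, $\mathsf{C}\subseteq\mathsf{X}_A$. Goal I for $G$: a DAG $G'=(N,E')$ with $\mathrm{roots}(G')\supseteq\mathrm{leaves}(G)$ such that for every $P\in\mathcal{P}^G$ there exists $K\in\mathcal{K}^{G'}$ (with $A=\mathrm{leaves}(G)$) that is a version of $P_{N\setminus\mathrm{leaves}(G)\mid\mathrm{leaves}(G)}$. Goal II for $G$: a DAG $G'=(N,E')$ with $\mathcal{P}^{G'}\supseteq\mathcal{P}^G$ such that every parent in $G'$ of a node in $\mathrm{leaves}(G)$ is itself in $\mathrm{leaves}(G)$. *)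

theory Defs
  imports "HOL-Probability.Probability"
begin

definition is_dag :: "'n set \<Rightarrow> ('n \<times> 'n) set \<Rightarrow> bool" where
  "is_dag N E \<longleftrightarrow> finite N \<and> E \<subseteq> N \<times> N \<and> acyclic E"

definition pa :: "('n \<times> 'n) set \<Rightarrow> 'n \<Rightarrow> 'n set" where
  "pa E s = {t. (t, s) \<in> E}"

definition ch :: "('n \<times> 'n) set \<Rightarrow> 'n \<Rightarrow> 'n set" where
  "ch E s = {t. (s, t) \<in> E}"

definition leaves :: "'n set \<Rightarrow> ('n \<times> 'n) set \<Rightarrow> 'n set" where
  "leaves N E = {s \<in> N. ch E s = {}}"

definition roots :: "'n set \<Rightarrow> ('n \<times> 'n) set \<Rightarrow> 'n set" where
  "roots N E = {s \<in> N. pa E s = {}}"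

definition topological_ordering :: "'n set \<Rightarrow> ('n \<times> 'n) set \<Rightarrow> ('n \<Rightarrow> nat) \<Rightarrow> bool" where
  "topological_ordering N E ord \<longleftrightarrow>
     bij_betw ord N {1..card N} \<and> (\<forall>s t. (s, t) \<in> E \<longrightarrow> ord s < ord t)"

text \<open>A node state space is either a
  finite set with counting measure, or R^d with (Borel-)Lebesgue measure, represented as the
  product measure of d copies of lborel (functions on {..<d}, extensional).\<close>

definition std_space :: "(nat \<Rightarrow> real) measure \<Rightarrow> bool" where
  "std_space Ms \<longleftrightarrow>
     (\<exists>F. finite F \<and> Ms = count_space F) \<or> (\<exists>d. Ms = PiM {..<d} (\<lambda>_. lborel))"

text \<open>A kernel function for s in (N,E): k(x_s | x_pa(s)), the second argument being a
  configuration of the parents (an element of X_{pa(s)}).\<close>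

definition kernel_function ::
  "('n \<Rightarrow> 'a measure) \<Rightarrow> ('n \<times> 'n) set \<Rightarrow> 'n \<Rightarrow> ('a \<Rightarrow> ('n \<Rightarrow> 'a) \<Rightarrow> real) \<Rightarrow> bool" where
  "kernel_function M E s k \<longleftrightarrow>
     (\<lambda>(x, y). k x y) \<in> borel_measurable (M s \<Otimes>\<^sub>M PiM (pa E s) M) \<and>
     (\<forall>x \<in> space (M s). \<forall>y \<in> space (PiM (pa E s) M). 0 \<le> k x y) \<and>
     (\<forall>y \<in> space (PiM (pa E s) M). (\<integral>\<^sup>+ x. ennreal (k x y) \<partial>M s) = 1)"

definition PG :: "'n set \<Rightarrow> ('n \<times> 'n) set \<Rightarrow> ('n \<Rightarrow> 'a measure) \<Rightarrow> ('n \<Rightarrow> 'a) measure set" where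
  "PG N E M = {P. prob_space P \<and>
     (\<exists>k. (\<forall>s\<in>N. kernel_function M E s (k s)) \<and>
          P = density (PiM N M) (\<lambda>x. \<Prod>s\<in>N. ennreal (k s (x s) (restrict x (pa E s)))))}"

text \<open>The set K^G (for a set A closed under parents): Markov kernels from X_A to X_{N-A}
  whose value at x_A has density prod_{s in N-A} k^s(x_s | x_pa(s)) w.r.t. mu_{N-A}; the parent
  configuration is taken from the merged configuration (x_A, x_{N-A}).\<close>

definition KG :: "'n set \<Rightarrow> ('n \<times> 'n) set \<Rightarrow> ('n \<Rightarrow> 'a measure) \<Rightarrow> 'n set
                   \<Rightarrow> (('n \<Rightarrow> 'a) \<Rightarrow> ('n \<Rightarrow> 'a) measure) set" where
  "KG N E M A = {K. K \<in> PiM A M \<rightarrow>\<^sub>M prob_algebra (PiM (N - A) M) \<and>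
     (\<exists>k. (\<forall>s\<in>N - A. kernel_function M E s (k s)) \<and>
          (\<forall>xA \<in> space (PiM A M).
             K xA = density (PiM (N - A) M)
               (\<lambda>y. \<Prod>s\<in>N - A. ennreal (k s (y s) (restrict (merge A (N - A) (xA, y)) (pa E s))))))}"

definition version_of_conditional ::
  "'n set \<Rightarrow> ('n \<Rightarrow> 'a measure) \<Rightarrow> 'n set \<Rightarrow> ('n \<Rightarrow> 'a) measure
     \<Rightarrow> (('n \<Rightarrow> 'a) \<Rightarrow> ('n \<Rightarrow> 'a) measure) \<Rightarrow> bool" where
  "version_of_conditional N M A P K \<longleftrightarrow>
     (\<forall>B \<in> sets (PiM (N - A) M). \<forall>C \<in> sets (PiM A M).
        emeasure P {x \<in> space P. restrict x (N - A) \<in> B \<and> restrict x A \<in> C}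
        = (\<integral>\<^sup>+ xA \<in> C. emeasure (K xA) B \<partial>(distr P (PiM A M) (\<lambda>x. restrict x A))))"

definition goal_I :: "'n set \<Rightarrow> ('n \<times> 'n) set \<Rightarrow> ('n \<Rightarrow> 'a measure) \<Rightarrow> ('n \<times> 'n) set \<Rightarrow> bool" where
  "goal_I N E M E' \<longleftrightarrow> is_dag N E' \<and> leaves N E \<subseteq> roots N E' \<and>
     (\<forall>P \<in> PG N E M. \<exists>K \<in> KG N E' M (leaves N E).
        version_of_conditional N M (leaves N E) P K)"

definition goal_II :: "'n set \<Rightarrow> ('n \<times> 'n) set \<Rightarrow> ('n \<Rightarrow> 'a measure) \<Rightarrow> ('n \<times> 'n) set \<Rightarrow> bool" where
  "goal_II N E M E' \<longleftrightarrow> is_dag N E' \<and> PG N E M \<subseteq> PG N E' M \<and>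
     (\<forall>s \<in> leaves N E. pa E' s \<subseteq> leaves N E)"

end

theory Submission
  imports Defs
begin
lemma exists_maximal:
  assumes "finite D" "D \<noteq> {}" "acyclic R"
  obtains m where "m \<in> D" "\<And>t. t \<in> D \<Longrightarrow> (m, t) \<notin> R"
proof -
  let ?R = "(R \<inter> D \<times> D)\<inverse>"
  have "finite ?R" using assms(1) by (auto intro: finite_subset[of _ "D \<times> D"])
  moreover have "acyclic ?R" by (rule acyclic_converse[THEN iffD2], rule acyclic_subset[OF assms(3)]) auto
  ultimately have "wf ?R" using wf_iff_acyclic_if_finite by blast
  note wfR = this
  from assms(2) obtain d where d: "d \<in> D" by blast
  have "\<exists>z\<in>D. \<forall>y. (y, z) \<in> ?R \<longrightarrow> y \<notin> D"
    using wfR[unfolded wf_eq_minimal, rule_format, OF d] .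
  then obtain m where m: "m \<in> D" "\<And>y. (y, m) \<in> ?R \<Longrightarrow> y \<notin> D"
    by blast
  show thesis
  proof (rule that[OF m(1)])
    fix t assume t: "t \<in> D"
    show "(m, t) \<notin> R"
    proof
      assume "(m, t) \<in> R"
      then have "(t, m) \<in> ?R" using t m(1) by auto
      then show False using m(2) t by blast
    qed
  qed
qed

lemma kernel_meas:
  assumes "kernel_function M R s k" "pa R s \<subseteq> I" "s \<in> I" "f \<in> X \<rightarrow>\<^sub>M PiM I M"
  shows "(\<lambda>x. ennreal (k (f x s) (restrict (f x) (pa R s)))) \<in> borel_measurable X"
proof -
  have k: "(\<lambda>(x, y). k x y) \<in> borel_measurable (M s \<Otimes>\<^sub>M PiM (pa R s) M)"
    using assms(1) unfolding kernel_function_def by auto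
  have "(\<lambda>x. (f x s, restrict (f x) (pa R s))) \<in> X \<rightarrow>\<^sub>M (M s \<Otimes>\<^sub>M PiM (pa R s) M)"
  proof (rule measurable_Pair)
    show "(\<lambda>x. f x s) \<in> X \<rightarrow>\<^sub>M M s"
      by (rule measurable_compose[OF assms(4) measurable_component_singleton[OF assms(3)]])
    show "(\<lambda>x. restrict (f x) (pa R s)) \<in> X \<rightarrow>\<^sub>M PiM (pa R s) M"
      by (rule measurable_compose[OF assms(4) measurable_restrict_subset[OF assms(2)]])
  qed
  from measurable_compose[OF this k] show ?thesis by simp
qed

lemma merge_upd_restrict:
  assumes "m \<notin> P" "D = insert m D0" "m \<notin> D0"
  shows "restrict (merge A D (z, x(m:=y))) P = restrict (merge A D0 (z,x)) P"
  using assms by (auto simp: restrict_def merge_def fun_eq_iff)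

lemma int_kernels:
  assumes psf: "product_sigma_finite M" and fin: "finite D" and ac: "acyclic R"
  and disj: "A \<inter> D = {}"
  and kf: "\<forall>s\<in>D. kernel_function M R s (k s)"
  and pas: "\<forall>s\<in>D. pa R s \<subseteq> A \<union> D"
  and z: "z \<in> space (PiM A M)"
  shows "(\<integral>\<^sup>+y. (\<Prod>s\<in>D. ennreal (k s (y s) (restrict (merge A D (z,y)) (pa R s)))) \<partial>PiM D M) = 1"
  using fin disj kf pas
proof (induction D rule: finite_psubset_induct)
  case (psubset D)
  interpret product_sigma_finite M by fact
  show ?case
  proof (cases "D = {}")
    case True
    then show ?thesis by (simp add: PiM_empty nn_integral_count_space_finite)
  next
    case False
    obtain m where m: "m \<in> D" "\<And>t. t \<in> D \<Longrightarrow> (m, t) \<notin> R"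
      by (rule exists_maximal[OF psubset(1) False ac], blast)
    define D0 where "D0 = D - {m}"
    have D: "D = insert m D0" "m \<notin> D0" "finite D0" using m psubset(1) by (auto simp: D0_def)
    have mpa: "\<And>s. s \<in> D \<Longrightarrow> m \<notin> pa R s" using m by (auto simp: pa_def)
    have IH: "(\<integral>\<^sup>+y. (\<Prod>s\<in>D0. ennreal (k s (y s) (restrict (merge A D0 (z,y)) (pa R s)))) \<partial>PiM D0 M) = 1"
    proof (rule psubset(2))
      show "D0 \<subset> D" using D by auto
      show "A \<inter> D0 = {}" using psubset(3) D by auto
      show "\<forall>s\<in>D0. kernel_function M R s (k s)" using psubset(4) D by auto
      show "\<forall>s\<in>D0. pa R s \<subseteq> A \<union> D0"
      proof
        fix s assume s: "s \<in> D0"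
        then have "pa R s \<subseteq> A \<union> D" "m \<notin> pa R s" using psubset(5) D mpa by auto
        then show "pa R s \<subseteq> A \<union> D0" using D by auto
      qed
    qed
    have mz: "(\<lambda>y. merge A D (z,y)) \<in> PiM D M \<rightarrow>\<^sub>M PiM (A \<union> D) M"
      using z by measurable
    have meas: "(\<lambda>y. \<Prod>s\<in>D. ennreal (k s (y s) (restrict (merge A D (z,y)) (pa R s)))) \<in> borel_measurable (PiM D M)"
    proof (rule borel_measurable_prod_ennreal)
      fix s assume s: "s \<in> D"
      have "(\<lambda>y. ennreal (k s (merge A D (z,y) s) (restrict (merge A D (z,y)) (pa R s)))) \<in> borel_measurable (PiM D M)"
        by (rule kernel_meas[OF _ _ _ mz]) (use s psubset(3-5) in auto)
      moreover have "merge A D (z,y) s = y s" for y using s psubset(3) by (auto simp: merge_def)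
      ultimately show "(\<lambda>y. ennreal (k s (y s) (restrict (merge A D (z,y)) (pa R s)))) \<in> borel_measurable (PiM D M)"
        by simp
    qed
    have "(\<integral>\<^sup>+y. (\<Prod>s\<in>D. ennreal (k s (y s) (restrict (merge A D (z,y)) (pa R s)))) \<partial>PiM D M)
       = (\<integral>\<^sup>+x. (\<integral>\<^sup>+y. (\<Prod>s\<in>D. ennreal (k s ((x(m:=y)) s) (restrict (merge A D (z,x(m:=y))) (pa R s)))) \<partial>M m) \<partial>PiM D0 M)"
      using product_nn_integral_insert[OF D(3) D(2), folded D(1), OF meas] by simp
    also have "\<dots> = (\<integral>\<^sup>+x. (\<Prod>s\<in>D0. ennreal (k s (x s) (restrict (merge A D0 (z,x)) (pa R s)))) \<partial>PiM D0 M)"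
    proof (rule nn_integral_cong)
      fix x assume x: "x \<in> space (PiM D0 M)"
      let ?c = "\<Prod>s\<in>D0. ennreal (k s (x s) (restrict (merge A D0 (z,x)) (pa R s)))"
      let ?w = "restrict (merge A D0 (z,x)) (pa R m)"
      have eq: "(\<Prod>s\<in>D. ennreal (k s ((x(m:=y)) s) (restrict (merge A D (z,x(m:=y))) (pa R s))))
           = ?c * ennreal (k m y ?w)" for y
      proof -
        have "(\<Prod>s\<in>D. ennreal (k s ((x(m:=y)) s) (restrict (merge A D (z,x(m:=y))) (pa R s))))
          = ennreal (k m y (restrict (merge A D (z,x(m:=y))) (pa R m))) *
            (\<Prod>s\<in>D0. ennreal (k s ((x(m:=y)) s) (restrict (merge A D (z,x(m:=y))) (pa R s))))"
          using D by (simp add: prod.insert)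
        also have "(\<Prod>s\<in>D0. ennreal (k s ((x(m:=y)) s) (restrict (merge A D (z,x(m:=y))) (pa R s)))) = ?c"
        proof (rule prod.cong[OF refl])
          fix s assume s: "s \<in> D0"
          then have sm: "s \<noteq> m" and msp: "m \<notin> pa R s" using D mpa by auto
          have "restrict (merge A D (z, x(m:=y))) (pa R s) = restrict (merge A D0 (z,x)) (pa R s)"
            by (rule merge_upd_restrict[OF msp D(1,2)])
          with sm show "ennreal (k s ((x(m:=y)) s) (restrict (merge A D (z,x(m:=y))) (pa R s))) =
                ennreal (k s (x s) (restrict (merge A D0 (z,x)) (pa R s)))"
            by simp
        qed
        also have "restrict (merge A D (z,x(m:=y))) (pa R m) = ?w"
          using merge_upd_restrict[OF mpa[OF m(1)] D(1,2)] .
        finally show ?thesis by (simp only: mult.commute)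
      qed
      have wsp: "?w \<in> space (PiM (pa R m) M)"
      proof -
        have "merge A D0 (z,x) \<in> space (PiM (A \<union> D0) M)"
          using z x measurable_space[OF measurable_merge, of "(z,x)" A M D0]
          by (simp add: space_pair_measure)
        moreover have "pa R m \<subseteq> A \<union> D0" using psubset(5) m mpa D by auto
        ultimately show ?thesis by (auto simp: space_PiM PiE_iff)
      qed
      have km: "(\<lambda>y. ennreal (k m y ?w)) \<in> borel_measurable (M m)"
      proof -
        have "(\<lambda>(x, y). k m x y) \<in> borel_measurable (M m \<Otimes>\<^sub>M PiM (pa R m) M)"
          using psubset(4) m unfolding kernel_function_def by auto
        from measurable_compose[OF measurable_Pair2'[OF wsp] this] show ?thesis by simp
      qed
      have "(\<integral>\<^sup>+ y. ennreal (k m y ?w) \<partial>M m) = 1"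
        using psubset(4) m wsp unfolding kernel_function_def by auto
      then show "(\<integral>\<^sup>+y. (\<Prod>s\<in>D. ennreal (k s ((x(m:=y)) s) (restrict (merge A D (z,x(m:=y))) (pa R s)))) \<partial>M m) = ?c"
        unfolding eq by (simp add: nn_integral_cmult[OF km])
    qed
    also have "\<dots> = 1" by (rule IH)
    finally show ?thesis .
  qed
qed

lemma restrict_space_id: "x \<in> space (PiM I M) \<Longrightarrow> restrict x I = x"
  by (auto simp: space_PiM PiE_def extensional_restrict)

lemma marginal_density:
  assumes psf: "product_sigma_finite M" and fin: "finite N" and L: "L \<subseteq> N"
  and p[measurable]: "p \<in> borel_measurable (PiM N M)"
  shows "distr (density (PiM N M) p) (PiM L M) (\<lambda>x. restrict x L)
       = density (PiM L M) (\<lambda>z. \<integral>\<^sup>+y. p (merge L (N - L) (z, y)) \<partial>PiM (N - L) M)"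
proof (rule measure_eqI)
  interpret product_sigma_finite M by fact
  have U: "L \<union> (N - L) = N" using L by auto
  have D: "L \<inter> (N - L) = {}" by auto
  have finL: "finite L" "finite (N - L)" using fin L finite_subset by auto
  interpret R: sigma_finite_measure "PiM (N - L) M" by (rule sigma_finite[OF finL(2)])
  have rm: "(\<lambda>x. restrict x L) \<in> PiM N M \<rightarrow>\<^sub>M PiM L M" using L by (rule measurable_restrict_subset)
  have pm: "(\<lambda>(z, y). p (merge L (N - L) (z, y))) \<in> borel_measurable (PiM L M \<Otimes>\<^sub>M PiM (N - L) M)"
  proof -
    have pU: "p \<in> borel_measurable (PiM (L \<union> (N - L)) M)" using p by (simp only: U)
    have "(\<lambda>x. p (merge L (N - L) x)) \<in> borel_measurable (PiM L M \<Otimes>\<^sub>M PiM (N - L) M)"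
      by (rule measurable_compose[OF measurable_merge pU])
    note pm0 = this
    moreover have "(\<lambda>(z, y). p (merge L (N - L) (z, y))) = (\<lambda>x. p (merge L (N - L) x))"
      by (rule ext) (simp add: split_beta)
    ultimately show ?thesis by simp
  qed
  have pm0: "(\<lambda>x. p (merge L (N - L) x)) \<in> borel_measurable (PiM L M \<Otimes>\<^sub>M PiM (N - L) M)"
  proof -
    have pU: "p \<in> borel_measurable (PiM (L \<union> (N - L)) M)" using p by (simp only: U)
    show ?thesis by (rule measurable_compose[OF measurable_merge pU])
  qed
  have qm: "(\<lambda>z. \<integral>\<^sup>+y. p (merge L (N - L) (z, y)) \<partial>PiM (N - L) M) \<in> borel_measurable (PiM L M)"
    using R.borel_measurable_nn_integral[of "\<lambda>z y. p (merge L (N - L) (z, y))"] pm by simp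
  show "sets (distr (density (PiM N M) p) (PiM L M) (\<lambda>x. restrict x L)) = sets (density (PiM L M) (\<lambda>z. \<integral>\<^sup>+y. p (merge L (N - L) (z, y)) \<partial>PiM (N - L) M))"
    by simp
  fix A assume "A \<in> sets (distr (density (PiM N M) p) (PiM L M) (\<lambda>x. restrict x L))"
  then have A[measurable]: "A \<in> sets (PiM L M)" by simp
  have pre: "(\<lambda>x. restrict x L) -` A \<inter> space (PiM N M) \<in> sets (PiM N M)"
    using rm A by (rule measurable_sets)
  have fm: "(\<lambda>x. p x * indicator A (restrict x L)) \<in> borel_measurable (PiM (L \<union> (N - L)) M)"
    unfolding U using rm by measurable
  have "emeasure (distr (density (PiM N M) p) (PiM L M) (\<lambda>x. restrict x L)) A
      = emeasure (density (PiM N M) p) ((\<lambda>x. restrict x L) -` A \<inter> space (PiM N M))"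
    by (subst emeasure_distr) (use rm A in simp_all)
  also have "\<dots> = (\<integral>\<^sup>+x. p x * indicator ((\<lambda>x. restrict x L) -` A \<inter> space (PiM N M)) x \<partial>PiM N M)"
    by (rule emeasure_density[OF p pre])
  also have "\<dots> = (\<integral>\<^sup>+x. p x * indicator A (restrict x L) \<partial>PiM N M)"
    by (rule nn_integral_cong) (auto simp: indicator_def)
  also have "\<dots> = (\<integral>\<^sup>+z. (\<integral>\<^sup>+y. p (merge L (N - L) (z, y)) * indicator A (restrict (merge L (N - L) (z, y)) L) \<partial>PiM (N - L) M) \<partial>PiM L M)"
    using product_nn_integral_fold[OF D finL fm] unfolding U by simp
  also have "\<dots> = (\<integral>\<^sup>+z. (\<integral>\<^sup>+y. p (merge L (N - L) (z, y)) \<partial>PiM (N - L) M) * indicator A z \<partial>PiM L M)"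
  proof (rule nn_integral_cong)
    fix z assume z: "z \<in> space (PiM L M)"
    have "restrict (merge L (N - L) (z, y)) L = z" for y
      using D restrict_space_id[OF z] by simp
    then show "(\<integral>\<^sup>+y. p (merge L (N - L) (z, y)) * indicator A (restrict (merge L (N - L) (z, y)) L) \<partial>PiM (N - L) M)
       = (\<integral>\<^sup>+y. p (merge L (N - L) (z, y)) \<partial>PiM (N - L) M) * indicator A z"
      using z measurable_compose[OF measurable_Pair1'[OF z] pm0] by (simp add: nn_integral_multc)
  qed
  also have "\<dots> = emeasure (density (PiM L M) (\<lambda>z. \<integral>\<^sup>+y. p (merge L (N - L) (z, y)) \<partial>PiM (N - L) M)) A"
    by (rule emeasure_density[OF qm A, symmetric])
  finally show "emeasure (distr (density (PiM N M) p) (PiM L M) (\<lambda>x. restrict x L)) A =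
     emeasure (density (PiM L M) (\<lambda>z. \<integral>\<^sup>+y. p (merge L (N - L) (z, y)) \<partial>PiM (N - L) M)) A" .
qed

lemma chain_rule:
  fixes ord :: "'n \<Rightarrow> nat"
  assumes psf: "product_sigma_finite M" and fin: "finite L" and inj: "inj_on ord L"
  and phi: "\<forall>s\<in>L. \<exists>\<phi>. \<phi> \<in> borel_measurable (M s) \<and> (\<forall>x. 0 \<le> \<phi> x) \<and> (\<integral>\<^sup>+x. ennreal (\<phi> x) \<partial>M s) = 1"
  and paR: "\<forall>s\<in>L. pa R s = {t\<in>L. ord t < ord s}"
  and q: "q \<in> borel_measurable (PiM L M)" and q1: "(\<integral>\<^sup>+x. q x \<partial>PiM L M) = 1"
  shows "\<exists>k. (\<forall>s\<in>L. kernel_function M R s (k s)) \<and>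
     density (PiM L M) q = density (PiM L M) (\<lambda>x. \<Prod>s\<in>L. ennreal (k s (x s) (restrict x (pa R s))))"
  using fin inj phi paR q q1
proof (induction L arbitrary: q rule: finite_ranking_induct[where f = ord])
  case empty
  have "q (\<lambda>k. undefined) = 1"
    using empty.prems(5) product_sigma_finite.nn_integral_empty[OF psf, of q] by simp
  then have "density (PiM {} M) q = density (PiM {} M) (\<lambda>x. \<Prod>s\<in>{}. ennreal (undefined s (x s) (restrict x (pa R s))))"
    using empty.prems(4) by (intro density_cong) (auto simp: space_PiM_empty)
  then show ?case by blast
next
  case (insert m S)
  show ?case
  proof (cases "m \<in> S")
    case True
    then have e: "insert m S = S" by blast
    have "\<exists>k. (\<forall>s\<in>S. kernel_function M R s (k s)) \<and>
     density (PiM S M) q = density (PiM S M) (\<lambda>x. \<Prod>s\<in>S. ennreal (k s (x s) (restrict x (pa R s))))"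
      by (rule insert.IH) (use insert.prems[unfolded e] in auto)
    then show ?thesis unfolding e .
  next
    case False
    note mS = False
    interpret product_sigma_finite M by fact
    interpret Mm: sigma_finite_measure "M m" by (rule sigma_finite_measures)
    interpret PS: sigma_finite_measure "PiM S M" by (rule sigma_finite[OF insert.hyps(1)])
    note q[measurable] = insert.prems(4)
    have ordlt: "ord t < ord m" if "t \<in> S" for t
    proof -
      have "ord t \<le> ord m" using insert.hyps(2) that by blast
      moreover have "ord t \<noteq> ord m" using insert.prems(1) that mS by (auto simp: inj_on_def)
      ultimately show ?thesis by simp
    qed
    have paS: "\<forall>s\<in>S. pa R s = {t\<in>S. ord t < ord s}"
    proof
      fix s assume s: "s \<in> S"
      then have "pa R s = {t\<in>insert m S. ord t < ord s}" using insert.prems(3) by blast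
      moreover have "\<not> ord m < ord s" using ordlt[OF s] by simp
      ultimately show "pa R s = {t\<in>S. ord t < ord s}" by auto
    qed
    have pam: "pa R m = S"
    proof -
      have "pa R m = {t\<in>insert m S. ord t < ord m}" using insert.prems(3) by blast
      then show ?thesis using ordlt by auto
    qed
    have qadd[measurable]: "(\<lambda>(z, y). q (z(m := y))) \<in> borel_measurable (PiM S M \<Otimes>\<^sub>M M m)"
      using measurable_compose[OF measurable_add_dim q] by (simp add: split_beta')
    define q0 where "q0 z = (\<integral>\<^sup>+y. q (z(m := y)) \<partial>M m)" for z
    have q0m[measurable]: "q0 \<in> borel_measurable (PiM S M)"
      unfolding q0_def using sigma_finite_measure.borel_measurable_nn_integral[OF sigma_finite_measures qadd] by simp
    have q01: "(\<integral>\<^sup>+z. q0 z \<partial>PiM S M) = 1"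
    proof -
      have "(\<integral>\<^sup>+z. q0 z \<partial>PiM S M) = integral\<^sup>N (PiM (insert m S) M) q"
        unfolding q0_def by (rule product_nn_integral_insert[OF insert.hyps(1) mS q, symmetric])
      then show ?thesis using insert.prems(5) by simp
    qed
    obtain k0 where kf0: "\<forall>s\<in>S. kernel_function M R s (k0 s)"
      and d0: "density (PiM S M) q0 = density (PiM S M) (\<lambda>x. \<Prod>s\<in>S. ennreal (k0 s (x s) (restrict x (pa R s))))"
    proof -
      have "\<exists>k. (\<forall>s\<in>S. kernel_function M R s (k s)) \<and>
        density (PiM S M) q0 = density (PiM S M) (\<lambda>x. \<Prod>s\<in>S. ennreal (k s (x s) (restrict x (pa R s))))"
      proof (rule insert.IH)
        show "inj_on ord S" using insert.prems(1) by (rule inj_on_subset) auto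
        show "\<forall>s\<in>S. \<exists>\<phi>. \<phi> \<in> borel_measurable (M s) \<and> (\<forall>x. 0 \<le> \<phi> x) \<and> (\<integral>\<^sup>+x. ennreal (\<phi> x) \<partial>M s) = 1"
          using insert.prems(2) by blast
        show "\<forall>s\<in>S. pa R s = {t\<in>S. ord t < ord s}" by (rule paS)
        show "q0 \<in> borel_measurable (PiM S M)" by (rule q0m)
        show "(\<integral>\<^sup>+z. q0 z \<partial>PiM S M) = 1" by (rule q01)
      qed
      then show thesis using that by blast
    qed
    define F0 where "F0 x = (\<Prod>s\<in>S. ennreal (k0 s (x s) (restrict x (pa R s))))" for x
    obtain \<phi> where phm[measurable]: "\<phi> \<in> borel_measurable (M m)" and ph0: "\<forall>x. 0 \<le> \<phi> x"
      and ph1: "(\<integral>\<^sup>+x. ennreal (\<phi> x) \<partial>M m) = 1"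
      using insert.prems(2) by blast
    define km where "km x z = (if q0 z \<noteq> 0 \<and> q0 z \<noteq> \<infinity> then enn2real (q (z(m := x)) / q0 z) else \<phi> x)" for x z
    define k where "k = k0(m := km)"
    have kmm[measurable]: "(\<lambda>(x, z). km x z) \<in> borel_measurable (M m \<Otimes>\<^sub>M PiM S M)"
      unfolding km_def by measurable
    have qz[measurable]: "(\<lambda>y. q (z(m := y))) \<in> borel_measurable (M m)" if z: "z \<in> space (PiM S M)" for z
      using measurable_compose[OF measurable_component_update[OF z mS] q] by (simp add: fun_upd_def)
    have kmf: "kernel_function M R m km"
      unfolding kernel_function_def pam
    proof (intro conjI ballI)
      show "(\<lambda>(x, z). km x z) \<in> borel_measurable (M m \<Otimes>\<^sub>M PiM S M)" by (rule kmm)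
      fix z assume z: "z \<in> space (PiM S M)"
      {
        fix x show "0 \<le> km x z" using ph0 by (simp add: km_def)
      }
      show "(\<integral>\<^sup>+x. ennreal (km x z) \<partial>M m) = 1"
      proof (cases "q0 z \<noteq> 0 \<and> q0 z \<noteq> \<infinity>")
        case True
        have i1: "(\<integral>\<^sup>+x. q (z(m := x)) / q0 z \<partial>M m) = 1"
          using True by (simp add: nn_integral_divide[OF qz[OF z]] q0_def[symmetric] less_top)
        have ae: "AE x in M m. q (z(m := x)) / q0 z \<noteq> \<infinity>"
          by (rule nn_integral_PInf_AE) (use z i1 in simp_all)
        have "(\<integral>\<^sup>+x. ennreal (km x z) \<partial>M m) = (\<integral>\<^sup>+x. q (z(m := x)) / q0 z \<partial>M m)"
          by (rule nn_integral_cong_AE) (use ae True in \<open>auto simp: km_def less_top\<close>)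
        then show ?thesis using i1 by simp
      next
        case False
        then have "\<And>x. km x z = \<phi> x" by (auto simp: km_def)
        then show ?thesis using ph1 by simp
      qed
    qed
    have kf: "\<forall>s\<in>insert m S. kernel_function M R s (k s)"
      using kf0 kmf mS by (auto simp: k_def)
    define F where "F x = (\<Prod>s\<in>insert m S. ennreal (k s (x s) (restrict x (pa R s))))" for x
    have paI: "pa R s \<subseteq> insert m S" if "s \<in> insert m S" for s
      using that pam paS by auto
    have Fm[measurable]: "F \<in> borel_measurable (PiM (insert m S) M)"
      unfolding F_def
    proof (rule borel_measurable_prod_ennreal)
      fix s assume s: "s \<in> insert m S"
      show "(\<lambda>x. ennreal (k s (x s) (restrict x (pa R s)))) \<in> borel_measurable (PiM (insert m S) M)"
        using kernel_meas[OF kf[rule_format, OF s] paI[OF s] s measurable_ident_sets[OF refl]] .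
    qed
    have F0m[measurable]: "F0 \<in> borel_measurable (PiM S M)"
      unfolding F0_def
    proof (rule borel_measurable_prod_ennreal)
      fix s assume s: "s \<in> S"
      have "pa R s \<subseteq> S" using paS s by auto
      then show "(\<lambda>x. ennreal (k0 s (x s) (restrict x (pa R s)))) \<in> borel_measurable (PiM S M)"
        using kernel_meas[OF kf0[rule_format, OF s] _ s measurable_ident_sets[OF refl]] by blast
    qed
    have Fsplit: "F (z(m := y)) = ennreal (km y z) * F0 z" if z: "z \<in> space (PiM S M)" for z y
    proof -
      have rz: "restrict (z(m := y)) S = z"
        using z mS by (auto simp: space_PiM PiE_def extensional_def restrict_def fun_eq_iff)
      have "F (z(m := y)) = ennreal (k m y (restrict (z(m := y)) (pa R m))) *
          (\<Prod>s\<in>S. ennreal (k s ((z(m := y)) s) (restrict (z(m := y)) (pa R s))))"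
        unfolding F_def using insert.hyps(1) mS by (simp add: prod.insert)
      also have "(\<Prod>s\<in>S. ennreal (k s ((z(m := y)) s) (restrict (z(m := y)) (pa R s)))) = F0 z"
        unfolding F0_def
      proof (rule prod.cong[OF refl])
        fix s assume s: "s \<in> S"
        have sm: "s \<noteq> m" using s mS by blast
        have "m \<notin> pa R s" using paS s mS by auto
        then have "restrict (z(m := y)) (pa R s) = restrict z (pa R s)"
          by (auto simp: restrict_def fun_eq_iff)
        then show "ennreal (k s ((z(m := y)) s) (restrict (z(m := y)) (pa R s))) =
          ennreal (k0 s (z s) (restrict z (pa R s)))" using sm by (simp add: k_def)
      qed
      finally show ?thesis by (simp only: pam rz k_def fun_upd_same)
    qed
    show ?thesis
    proof (intro exI conjI)
      show "\<forall>s\<in>insert m S. kernel_function M R s (k s)" by (rule kf)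
      show "density (PiM (insert m S) M) q = density (PiM (insert m S) M) (\<lambda>x. \<Prod>s\<in>insert m S. ennreal (k s (x s) (restrict x (pa R s))))"
        unfolding F_def[symmetric]
      proof (rule measure_eqI)
        show "sets (density (PiM (insert m S) M) q) = sets (density (PiM (insert m S) M) F)" by simp
        fix A assume "A \<in> sets (density (PiM (insert m S) M) q)"
        then have A[measurable]: "A \<in> sets (PiM (insert m S) M)" by simp
        define h where "h z = (\<integral>\<^sup>+y. ennreal (km y z) * indicator A (z(m := y)) \<partial>M m)" for z
        define g where "g z = (\<integral>\<^sup>+y. q (z(m := y)) * indicator A (z(m := y)) \<partial>M m)" for z
        have hm[measurable]: "h \<in> borel_measurable (PiM S M)"
          unfolding h_def by measurable
        have AEfin: "AE z in PiM S M. q0 z \<noteq> \<infinity>"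
          by (rule nn_integral_PInf_AE) (simp_all add: q01)
        have ae: "AE z in PiM S M. q0 z * h z = g z"
          using AEfin
        proof (rule AE_mp)
          show "AE z in PiM S M. q0 z \<noteq> \<infinity> \<longrightarrow> q0 z * h z = g z"
          proof (rule AE_I2, rule impI)
            fix z assume z: "z \<in> space (PiM S M)" and fz: "q0 z \<noteq> \<infinity>"
            show "q0 z * h z = g z"
            proof (cases "q0 z = 0")
              case True
              have "g z \<le> (\<integral>\<^sup>+y. q (z(m := y)) \<partial>M m)"
                unfolding g_def by (rule nn_integral_mono) (auto simp: indicator_def)
              then have "g z = 0" using True by (simp add: q0_def)
              then show ?thesis using True by simp
            next
              case False
              have aey: "AE y in M m. q (z(m := y)) \<noteq> \<infinity>"
                by (rule nn_integral_PInf_AE) (use z fz in \<open>simp_all add: q0_def\<close>)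
              have "h z = (\<integral>\<^sup>+y. q (z(m := y)) * indicator A (z(m := y)) / q0 z \<partial>M m)"
                unfolding h_def
              proof (rule nn_integral_cong_AE)
                show "AE y in M m. ennreal (km y z) * indicator A (z(m := y)) = q (z(m := y)) * indicator A (z(m := y)) / q0 z"
                  using aey
                proof (rule AE_mp, intro AE_I2 impI)
                  fix y assume "q (z(m := y)) \<noteq> \<infinity>"
                  then have "q (z(m := y)) / q0 z \<noteq> \<infinity>" using False by (simp add: ennreal_divide_eq_top_iff)
                  then have "ennreal (km y z) = q (z(m := y)) / q0 z"
                    using False fz by (simp add: km_def less_top)
                  then show "ennreal (km y z) * indicator A (z(m := y)) = q (z(m := y)) * indicator A (z(m := y)) / q0 z"
                    by (simp add: ennreal_divide_times ennreal_times_divide mult.commute)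
                qed
              qed
              also have "\<dots> = g z / q0 z"
                unfolding g_def using z by (intro nn_integral_divide) measurable
              finally show ?thesis using False fz
                by (simp add: ennreal_times_divide mult.commute ennreal_mult_divide_eq)
            qed
          qed
        qed
        have "emeasure (density (PiM (insert m S) M) q) A = (\<integral>\<^sup>+x. q x * indicator A x \<partial>PiM (insert m S) M)"
          by (rule emeasure_density) measurable
        also have "\<dots> = (\<integral>\<^sup>+z. g z \<partial>PiM S M)"
          unfolding g_def by (rule product_nn_integral_insert[OF insert.hyps(1) mS]) measurable
        also have "\<dots> = (\<integral>\<^sup>+z. q0 z * h z \<partial>PiM S M)"
          by (rule nn_integral_cong_AE) (use ae in \<open>auto elim: AE_mp\<close>)
        also have "\<dots> = integral\<^sup>N (density (PiM S M) q0) h"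
          by (rule nn_integral_density[symmetric]) measurable
        also have "\<dots> = integral\<^sup>N (density (PiM S M) F0) h"
          using d0 unfolding F0_def by simp
        also have "\<dots> = (\<integral>\<^sup>+z. F0 z * h z \<partial>PiM S M)"
          by (rule nn_integral_density) measurable
        also have "\<dots> = (\<integral>\<^sup>+z. (\<integral>\<^sup>+y. F (z(m := y)) * indicator A (z(m := y)) \<partial>M m) \<partial>PiM S M)"
        proof (rule nn_integral_cong)
          fix z assume z: "z \<in> space (PiM S M)"
          have "(\<integral>\<^sup>+y. F (z(m := y)) * indicator A (z(m := y)) \<partial>M m)
              = (\<integral>\<^sup>+y. F0 z * (ennreal (km y z) * indicator A (z(m := y))) \<partial>M m)"
            using Fsplit[OF z] by (simp add: mult_ac)
          also have "\<dots> = F0 z * h z"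
            unfolding h_def using z by (intro nn_integral_cmult) measurable
          finally show "F0 z * h z = (\<integral>\<^sup>+y. F (z(m := y)) * indicator A (z(m := y)) \<partial>M m)" by simp
        qed
        also have "\<dots> = (\<integral>\<^sup>+x. F x * indicator A x \<partial>PiM (insert m S) M)"
          by (rule product_nn_integral_insert[OF insert.hyps(1) mS, symmetric]) measurable
        also have "\<dots> = emeasure (density (PiM (insert m S) M) F) A"
          by (rule emeasure_density[symmetric]) measurable
        finally show "emeasure (density (PiM (insert m S) M) q) A = emeasure (density (PiM (insert m S) M) F) A" .
      qed
    qed
  qed
qed

lemma restrict_merge_sub:
  "P \<subseteq> L \<Longrightarrow> L \<inter> R = {} \<Longrightarrow> restrict (merge L R (z, y)) P = restrict z P"
  by (auto simp: restrict_def merge_def fun_eq_iff)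

lemma merge_L: "s \<in> L \<Longrightarrow> merge L R (z, y) s = z s"
  by (simp add: merge_def)

lemma merge_R: "s \<in> R \<Longrightarrow> s \<notin> L \<Longrightarrow> merge L R (z, y) s = y s"
  by (simp add: merge_def)

lemma kf_cong: "pa E1 s = pa E2 s \<Longrightarrow> kernel_function M E1 s k = kernel_function M E2 s k"
  by (simp add: kernel_function_def)

lemma prod_kernel_meas:
  assumes "finite D" "\<forall>s\<in>D. kernel_function M E s (k s)" "\<forall>s\<in>D. pa E s \<subseteq> I" "D \<subseteq> I"
    "f \<in> X \<rightarrow>\<^sub>M PiM I M"
  shows "(\<lambda>x. \<Prod>s\<in>D. ennreal (k s (f x s) (restrict (f x) (pa E s)))) \<in> borel_measurable X"
proof (rule borel_measurable_prod_ennreal)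
  fix s assume s: "s \<in> D"
  show "(\<lambda>x. ennreal (k s (f x s) (restrict (f x) (pa E s)))) \<in> borel_measurable X"
    by (rule kernel_meas[OF _ _ _ assms(5)]) (use s assms in auto)
qed

lemma g_meas:
  assumes fin: "finite R" and disj: "L \<inter> R = {}" and kf: "\<forall>s\<in>R. kernel_function M E s (k s)"
    and pa: "\<forall>s\<in>R. pa E s \<subseteq> L \<union> R"
  shows "(\<lambda>(z, y). \<Prod>s\<in>R. ennreal (k s (y s) (restrict (merge L R (z, y)) (pa E s))))
     \<in> borel_measurable (PiM L M \<Otimes>\<^sub>M PiM R M)"
proof -
  have "(\<lambda>x. \<Prod>s\<in>R. ennreal (k s (merge L R x s) (restrict (merge L R x) (pa E s))))
     \<in> borel_measurable (PiM L M \<Otimes>\<^sub>M PiM R M)"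
    by (rule prod_kernel_meas[OF fin kf pa _ measurable_merge]) auto
  moreover have "(\<lambda>x. \<Prod>s\<in>R. ennreal (k s (merge L R x s) (restrict (merge L R x) (pa E s))))
     = (\<lambda>(z, y). \<Prod>s\<in>R. ennreal (k s (y s) (restrict (merge L R (z, y)) (pa E s))))"
  proof (rule ext, clarify)
    fix z y
    show "(\<Prod>s\<in>R. ennreal (k s (merge L R (z, y) s) (restrict (merge L R (z, y)) (pa E s)))) =
          (\<Prod>s\<in>R. ennreal (k s (y s) (restrict (merge L R (z, y)) (pa E s))))"
      by (rule prod.cong[OF refl]) (use disj in \<open>auto simp: merge_R\<close>)
  qed
  ultimately show ?thesis by simp
qed

lemma acyclic_rank:
  fixes f :: "'n \<Rightarrow> nat"
  assumes "\<forall>(s, t)\<in>E. f s < f t"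
  shows "acyclic E"
proof -
  have "f x < f y" if "(x, y) \<in> E\<^sup>+" for x y
    using that
  proof (induction rule: trancl_induct)
    case (base y) then show ?case using assms by auto
  next
    case (step y z) then show ?case using assms by fastforce
  qed
  then show ?thesis unfolding acyclic_def by blast
qed

lemma part_b:
  assumes psf: "product_sigma_finite M" and dag: "is_dag N E" and g2: "goal_II N E M E'"
  shows "goal_I N E M (E' - {(s, t). (s, t) \<in> E' \<and> s \<in> leaves N E \<and> t \<in> leaves N E})"
proof -
  interpret product_sigma_finite M by fact
  define L where "L = leaves N E"
  define R where "R = N - L"
  define E3 where "E3 = E' - {(s, t). (s, t) \<in> E' \<and> s \<in> leaves N E \<and> t \<in> leaves N E}"
  have finN: "finite N" using dag by (simp add: is_dag_def)
  have LN: "L \<subseteq> N" by (auto simp: L_def leaves_def)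
  have finL: "finite L" "finite R" using finN LN by (auto simp: R_def intro: finite_subset)
  have disj: "L \<inter> R = {}" and U: "L \<union> R = N" using LN by (auto simp: R_def)
  have dag': "is_dag N E'" and sub: "PG N E M \<subseteq> PG N E' M" and paL: "\<forall>s\<in>L. pa E' s \<subseteq> L"
    using g2 by (auto simp: goal_II_def L_def)
  have E'N: "E' \<subseteq> N \<times> N" and acE': "acyclic E'" using dag' by (auto simp: is_dag_def)
  have dag3: "is_dag N E3" using dag' acyclic_subset[OF acE'] by (auto simp: is_dag_def E3_def)
  have E3N: "E3 \<subseteq> N \<times> N" and ac3: "acyclic E3" using dag3 by (auto simp: is_dag_def)
  have roots3: "L \<subseteq> roots N E3"
  proof
    fix s assume s: "s \<in> L"
    have "pa E3 s = {}"
    proof (rule ccontr)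
      assume "pa E3 s \<noteq> {}"
      then obtain t where t: "(t, s) \<in> E3" by (auto simp: pa_def)
      then have "(t, s) \<in> E'" by (simp add: E3_def)
      then have "t \<in> L" using paL s by (auto simp: pa_def)
      then show False using t s by (simp add: E3_def L_def)
    qed
    then show "s \<in> roots N E3" using s LN by (auto simp: roots_def)
  qed
  have paeq: "pa E3 s = pa E' s" if "s \<in> R" for s using that by (auto simp: pa_def E3_def R_def L_def)
  have pa3N: "\<forall>s\<in>R. pa E3 s \<subseteq> L \<union> R" using E3N U by (auto simp: pa_def)
  have "goal_I N E M E3"
    unfolding goal_I_def L_def[symmetric]
  proof (intro conjI ballI)
    show "is_dag N E3" by fact
    show "L \<subseteq> roots N E3" by fact
    fix P assume "P \<in> PG N E M"
    then have "P \<in> PG N E' M" using sub by blast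
    then obtain k where Pp: "prob_space P" and kf: "\<forall>s\<in>N. kernel_function M E' s (k s)"
      and Pd: "P = density (PiM N M) (\<lambda>x. \<Prod>s\<in>N. ennreal (k s (x s) (restrict x (pa E' s))))"
      by (auto simp: PG_def)
    define p where "p x = (\<Prod>s\<in>N. ennreal (k s (x s) (restrict x (pa E' s))))" for x
    define g where "g z y = (\<Prod>s\<in>R. ennreal (k s (y s) (restrict (merge L R (z, y)) (pa E3 s))))" for z y
    define f where "f z = (\<Prod>s\<in>L. ennreal (k s (z s) (restrict z (pa E' s))))" for z
    define K where "K z = density (PiM R M) (g z)" for z
    have kf3: "\<forall>s\<in>R. kernel_function M E3 s (k s)" using kf kf_cong[OF paeq] by (auto simp: R_def)
    have gm[measurable]: "(\<lambda>(z, y). g z y) \<in> borel_measurable (PiM L M \<Otimes>\<^sub>M PiM R M)"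
      unfolding g_def by (rule g_meas[OF finL(2) disj kf3 pa3N])
    have gz[measurable]: "g z \<in> borel_measurable (PiM R M)" if "z \<in> space (PiM L M)" for z
      using measurable_compose[OF measurable_Pair1'[OF that] gm] by simp
    have pm[measurable]: "p \<in> borel_measurable (PiM N M)"
      unfolding p_def by (rule prod_kernel_meas[OF finN kf _ _ measurable_ident_sets[OF refl]]) (use E'N in \<open>auto simp: pa_def\<close>)
    have fm[measurable]: "f \<in> borel_measurable (PiM L M)"
      unfolding f_def by (rule prod_kernel_meas[OF finL(1) _ paL _ measurable_ident_sets[OF refl]]) (use kf LN in auto)
    have g1: "(\<integral>\<^sup>+y. g z y \<partial>PiM R M) = 1" if "z \<in> space (PiM L M)" for z
      unfolding g_def by (rule int_kernels[OF psf finL(2) ac3 disj kf3 pa3N that])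
    have psplit: "p (merge L R (z, y)) = f z * g z y" for z y
    proof -
      have "p (merge L R (z, y)) = (\<Prod>s\<in>L. ennreal (k s (merge L R (z, y) s) (restrict (merge L R (z, y)) (pa E' s)))) *
             (\<Prod>s\<in>R. ennreal (k s (merge L R (z, y) s) (restrict (merge L R (z, y)) (pa E' s))))"
        unfolding p_def U[symmetric] by (rule prod.union_disjoint[OF finL disj])
      also have "(\<Prod>s\<in>L. ennreal (k s (merge L R (z, y) s) (restrict (merge L R (z, y)) (pa E' s)))) = f z"
        unfolding f_def by (rule prod.cong[OF refl]) (use paL disj in \<open>auto simp: merge_L restrict_merge_sub\<close>)
      also have "(\<Prod>s\<in>R. ennreal (k s (merge L R (z, y) s) (restrict (merge L R (z, y)) (pa E' s)))) = g z y"
        unfolding g_def by (rule prod.cong[OF refl]) (use disj paeq in \<open>auto simp: merge_R\<close>)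
      finally show ?thesis .
    qed
    have Kprob: "prob_space (K z)" if z: "z \<in> space (PiM L M)" for z
    proof (rule prob_spaceI)
      have "emeasure (K z) (space (K z)) = (\<integral>\<^sup>+y. g z y * indicator (space (PiM R M)) y \<partial>PiM R M)"
        unfolding K_def using emeasure_density[OF gz[OF z] sets.top[of "PiM R M"]] by simp
      also have "\<dots> = (\<integral>\<^sup>+y. g z y \<partial>PiM R M)" by (rule nn_integral_cong) simp
      finally show "emeasure (K z) (space (K z)) = 1" using g1[OF z] by simp
    qed
    have Kem: "emeasure (K z) B = (\<integral>\<^sup>+y. g z y * indicator B y \<partial>PiM R M)"
      if "z \<in> space (PiM L M)" "B \<in> sets (PiM R M)" for z B
      unfolding K_def by (rule emeasure_density[OF gz[OF that(1)] that(2)])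
    interpret RR: sigma_finite_measure "PiM R M" by (rule sigma_finite[OF finL(2)])
    have Kemm: "(\<lambda>z. emeasure (K z) B) \<in> borel_measurable (PiM L M)" if B: "B \<in> sets (PiM R M)" for B
    proof -
      have "(\<lambda>(z, y). g z y * indicator B y) \<in> borel_measurable (PiM L M \<Otimes>\<^sub>M PiM R M)"
        using B by measurable
      then have "(\<lambda>z. \<integral>\<^sup>+y. g z y * indicator B y \<partial>PiM R M) \<in> borel_measurable (PiM L M)"
        by (rule RR.borel_measurable_nn_integral)
      then show ?thesis by (rule measurable_cong[THEN iffD1, rotated]) (simp add: Kem B)
    qed
    have Kmeas: "K \<in> PiM L M \<rightarrow>\<^sub>M prob_algebra (PiM R M)"
    proof (rule measurable_prob_algebraI)
      show "prob_space (K z)" if "z \<in> space (PiM L M)" for z using Kprob that .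
      show "K \<in> PiM L M \<rightarrow>\<^sub>M subprob_algebra (PiM R M)"
      proof (rule measurable_subprob_algebra)
        show "subprob_space (K a)" if "a \<in> space (PiM L M)" for a
          by (rule prob_space_imp_subprob_space[OF Kprob[OF that]])
        show "sets (K a) = sets (PiM R M)" for a by (simp add: K_def)
        show "(\<lambda>a. emeasure (K a) A) \<in> borel_measurable (PiM L M)" if "A \<in> sets (PiM R M)" for A
          by (rule Kemm[OF that])
      qed
    qed
    have KG: "K \<in> KG N E3 M L"
      unfolding KG_def R_def[symmetric]
      by (intro CollectI conjI exI[of _ k] ballI Kmeas) (use kf3 in \<open>auto simp: K_def g_def[abs_def]\<close>)
    have ver: "version_of_conditional N M L P K"
      unfolding version_of_conditional_def R_def[symmetric]
    proof (intro ballI)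
      fix B C assume B[measurable]: "B \<in> sets (PiM R M)" and C[measurable]: "C \<in> sets (PiM L M)"
      define S where "S = {x \<in> space P. restrict x R \<in> B \<and> restrict x L \<in> C}"
      have spP: "space P = space (PiM N M)" using Pd by simp
      have rR[measurable]: "(\<lambda>x. restrict x R) \<in> PiM N M \<rightarrow>\<^sub>M PiM R M" using U by (intro measurable_restrict_subset) auto
      have rL[measurable]: "(\<lambda>x. restrict x L) \<in> PiM N M \<rightarrow>\<^sub>M PiM L M" using LN by (rule measurable_restrict_subset)
      have S[measurable]: "S \<in> sets (PiM N M)"
      proof -
        have "S = ((\<lambda>x. restrict x R) -` B \<inter> space (PiM N M)) \<inter> ((\<lambda>x. restrict x L) -` C \<inter> space (PiM N M))"
          by (auto simp: S_def spP)
        then show ?thesis using measurable_sets[OF rR B] measurable_sets[OF rL C] by auto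
      qed
      have fm2: "(\<lambda>x. p x * indicator S x) \<in> borel_measurable (PiM (L \<union> R) M)"
        unfolding U by measurable
      have Ki: "(\<lambda>z. emeasure (K z) B * indicator C z) \<in> borel_measurable (PiM L M)"
        using Kemm[OF B] by measurable
      have "emeasure P S = (\<integral>\<^sup>+x. p x * indicator S x \<partial>PiM N M)"
        unfolding Pd p_def[symmetric] by (rule emeasure_density[OF pm S])
      also have "\<dots> = (\<integral>\<^sup>+z. (\<integral>\<^sup>+y. p (merge L R (z, y)) * indicator S (merge L R (z, y)) \<partial>PiM R M) \<partial>PiM L M)"
        using product_nn_integral_fold[OF disj finL fm2] by (simp only: U)
      also have "\<dots> = (\<integral>\<^sup>+z. f z * (emeasure (K z) B * indicator C z) \<partial>PiM L M)"
      proof (rule nn_integral_cong)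
        fix z assume z: "z \<in> space (PiM L M)"
        have "(\<integral>\<^sup>+y. p (merge L R (z, y)) * indicator S (merge L R (z, y)) \<partial>PiM R M)
            = (\<integral>\<^sup>+y. (f z * indicator C z) * (g z y * indicator B y) \<partial>PiM R M)"
        proof (rule nn_integral_cong)
          fix y assume y: "y \<in> space (PiM R M)"
          have mN: "merge L R (z, y) \<in> space (PiM N M)"
            using z y measurable_space[OF measurable_merge, of "(z, y)" L M R] U by (simp add: space_pair_measure)
          have "restrict (merge L R (z, y)) R = y" using disj restrict_space_id[OF y] by simp
          moreover have "restrict (merge L R (z, y)) L = z" using disj restrict_space_id[OF z] by simp
          ultimately have "indicator S (merge L R (z, y)) = (indicator C z * indicator B y :: ennreal)"
            using mN by (auto simp: S_def spP indicator_def)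
          then show "p (merge L R (z, y)) * indicator S (merge L R (z, y)) = (f z * indicator C z) * (g z y * indicator B y)"
            using psplit by (simp add: mult_ac)
        qed
        also have "\<dots> = (f z * indicator C z) * emeasure (K z) B"
          using z by (simp add: nn_integral_cmult Kem[OF z B])
        finally show "(\<integral>\<^sup>+y. p (merge L R (z, y)) * indicator S (merge L R (z, y)) \<partial>PiM R M) = f z * (emeasure (K z) B * indicator C z)"
          by (simp add: mult_ac)
      qed
      also have "\<dots> = (\<integral>\<^sup>+z. emeasure (K z) B * indicator C z \<partial>density (PiM L M) f)"
        by (rule nn_integral_density[OF fm Ki, symmetric])
      also have "density (PiM L M) f = distr P (PiM L M) (\<lambda>x. restrict x L)"
      proof -
        have qf: "(\<integral>\<^sup>+y. p (merge L (N - L) (z, y)) \<partial>PiM (N - L) M) = f z" if z: "z \<in> space (PiM L M)" for z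
        proof -
          have "(\<integral>\<^sup>+y. p (merge L (N - L) (z, y)) \<partial>PiM (N - L) M) = (\<integral>\<^sup>+y. f z * g z y \<partial>PiM R M)"
            unfolding R_def[symmetric] psplit ..
          also have "\<dots> = f z" using z g1[OF z] by (simp add: nn_integral_cmult)
          finally show ?thesis .
        qed
        have qm: "(\<lambda>z. \<integral>\<^sup>+y. p (merge L (N - L) (z, y)) \<partial>PiM (N - L) M) \<in> borel_measurable (PiM L M)"
          using fm by (rule measurable_cong[THEN iffD1, rotated]) (simp add: qf)
        have "distr P (PiM L M) (\<lambda>x. restrict x L) = density (PiM L M) (\<lambda>z. \<integral>\<^sup>+y. p (merge L (N - L) (z, y)) \<partial>PiM (N - L) M)"
          unfolding Pd p_def[symmetric] by (rule marginal_density[OF psf finN LN pm])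
        also have "\<dots> = density (PiM L M) f"
          by (rule density_cong[OF qm fm]) (simp add: qf)
        finally show ?thesis by simp
      qed
      finally show "emeasure P {x \<in> space P. restrict x R \<in> B \<and> restrict x L \<in> C} =
         (\<integral>\<^sup>+xA\<in>C. emeasure (K xA) B \<partial>distr P (PiM L M) (\<lambda>x. restrict x L))"
        unfolding S_def .
    qed
    show "\<exists>K\<in>KG N E3 M L. version_of_conditional N M L P K"
      using KG ver by blast
  qed
  then show ?thesis unfolding E3_def .
qed

lemma part_a:
  fixes ord :: "'n \<Rightarrow> nat"
  assumes psf: "product_sigma_finite M" and dag: "is_dag N E"
  and phi: "\<forall>s\<in>N. space (M s) \<noteq> {} \<longrightarrow> (\<exists>\<phi>. \<phi> \<in> borel_measurable (M s) \<and> (\<forall>x. 0 \<le> \<phi> x) \<and> (\<integral>\<^sup>+x. ennreal (\<phi> x) \<partial>M s) = 1)"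
  and g1: "goal_I N E M E'" and top: "topological_ordering N E' ord"
  shows "goal_II N E M (E' \<union> {(s, t). s \<in> leaves N E \<and> t \<in> leaves N E \<and> ord s < ord t})"
proof -
  interpret product_sigma_finite M by fact
  define L where "L = leaves N E"
  define R where "R = N - L"
  define E2 where "E2 = E' \<union> {(s, t). s \<in> leaves N E \<and> t \<in> leaves N E \<and> ord s < ord t}"
  have finN: "finite N" and EN: "E \<subseteq> N \<times> N" using dag by (auto simp: is_dag_def)
  have LN: "L \<subseteq> N" by (auto simp: L_def leaves_def)
  have finL: "finite L" "finite R" using finN LN by (auto simp: R_def intro: finite_subset)
  have disj: "L \<inter> R = {}" and U: "L \<union> R = N" using LN by (auto simp: R_def)
  have dag': "is_dag N E'" and rootsL: "L \<subseteq> roots N E'"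
    and Kex: "\<forall>P\<in>PG N E M. \<exists>K\<in>KG N E' M L. version_of_conditional N M L P K"
    using g1 by (auto simp: goal_I_def L_def)
  have E'N: "E' \<subseteq> N \<times> N" using dag' by (auto simp: is_dag_def)
  have inj: "inj_on ord N" using top by (auto simp: topological_ordering_def bij_betw_def)
  have ordE: "\<forall>s t. (s, t) \<in> E' \<longrightarrow> ord s < ord t" using top by (auto simp: topological_ordering_def)
  have E2N: "E2 \<subseteq> N \<times> N" using E'N LN by (auto simp: E2_def L_def)
  have ac2: "acyclic E2"
    by (rule acyclic_rank[of _ ord]) (use ordE in \<open>auto simp: E2_def\<close>)
  have dag2: "is_dag N E2" using finN E2N ac2 by (simp add: is_dag_def)
  have paE'L: "pa E' s = {}" if "s \<in> L" for s using rootsL that by (auto simp: roots_def)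
  have paL2: "\<forall>s\<in>L. pa E2 s = {t\<in>L. ord t < ord s}"
    using paE'L by (auto simp: pa_def E2_def L_def)
  have paR2: "pa E2 s = pa E' s" if "s \<in> R" for s using that by (auto simp: pa_def E2_def R_def L_def)
  have "goal_II N E M E2"
    unfolding goal_II_def L_def[symmetric]
  proof (intro conjI)
    show "is_dag N E2" by (rule dag2)
    show "\<forall>s\<in>L. pa E2 s \<subseteq> L" using paL2 by auto
    show "PG N E M \<subseteq> PG N E2 M"
    proof
      fix P assume PG: "P \<in> PG N E M"
      then obtain k where Pp: "prob_space P" and kf: "\<forall>s\<in>N. kernel_function M E s (k s)"
        and Pd: "P = density (PiM N M) (\<lambda>x. \<Prod>s\<in>N. ennreal (k s (x s) (restrict x (pa E s))))"
        by (auto simp: PG_def)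
      define p where "p x = (\<Prod>s\<in>N. ennreal (k s (x s) (restrict x (pa E s))))" for x
      have pm[measurable]: "p \<in> borel_measurable (PiM N M)"
        unfolding p_def by (rule prod_kernel_meas[OF finN kf _ _ measurable_ident_sets[OF refl]]) (use EN in \<open>auto simp: pa_def\<close>)
      have spP: "space P = space (PiM N M)" using Pd by simp
      have P1: "emeasure P (space P) = 1" by (rule prob_space.emeasure_space_1[OF Pp])
      have nonempty: "space (M s) \<noteq> {}" if "s \<in> N" for s
      proof
        assume "space (M s) = {}"
        then have "space (PiM N M) = {}" using that by auto
        then show False using P1 spP by (metis emeasure_empty zero_neq_one)
      qed
      have phiL: "\<forall>s\<in>L. \<exists>\<phi>. \<phi> \<in> borel_measurable (M s) \<and> (\<forall>x. 0 \<le> \<phi> x) \<and> (\<integral>\<^sup>+x. ennreal (\<phi> x) \<partial>M s) = 1"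
        using phi nonempty LN by blast
      obtain K where KG: "K \<in> KG N E' M L" and ver: "version_of_conditional N M L P K"
        using Kex PG by blast
      obtain k' where Kmeas: "K \<in> PiM L M \<rightarrow>\<^sub>M prob_algebra (PiM R M)"
        and kf': "\<forall>s\<in>R. kernel_function M E' s (k' s)"
        and Kd: "\<forall>xA\<in>space (PiM L M). K xA = density (PiM R M)
               (\<lambda>y. \<Prod>s\<in>R. ennreal (k' s (y s) (restrict (merge L R (xA, y)) (pa E' s))))"
        using KG unfolding KG_def R_def[symmetric] by blast
      interpret RR: sigma_finite_measure "PiM R M" by (rule sigma_finite[OF finL(2)])
      define q where "q z = (\<integral>\<^sup>+y. p (merge L R (z, y)) \<partial>PiM R M)" for z
      have pm0: "(\<lambda>x. p (merge L R x)) \<in> borel_measurable (PiM L M \<Otimes>\<^sub>M PiM R M)"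
      proof -
        have pU: "p \<in> borel_measurable (PiM (L \<union> R) M)" using pm by (simp only: U)
        show ?thesis by (rule measurable_compose[OF measurable_merge pU])
      qed
      have qm[measurable]: "q \<in> borel_measurable (PiM L M)"
      proof -
        have "(\<lambda>(z, y). p (merge L R (z, y))) = (\<lambda>x. p (merge L R x))"
          by (rule ext) (simp add: split_beta)
        then have "(\<lambda>(z, y). p (merge L R (z, y))) \<in> borel_measurable (PiM L M \<Otimes>\<^sub>M PiM R M)"
          using pm0 by simp
        then show ?thesis unfolding q_def by (rule RR.borel_measurable_nn_integral)
      qed
      have marg: "distr P (PiM L M) (\<lambda>x. restrict x L) = density (PiM L M) q"
        unfolding Pd p_def[symmetric] q_def R_def by (rule marginal_density[OF psf finN LN pm])
      have rL[measurable]: "(\<lambda>x. restrict x L) \<in> PiM N M \<rightarrow>\<^sub>M PiM L M" using LN by (rule measurable_restrict_subset)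
      have q1: "(\<integral>\<^sup>+z. q z \<partial>PiM L M) = 1"
      proof -
        have "(\<integral>\<^sup>+z. q z \<partial>PiM L M) = (\<integral>\<^sup>+z. q z * indicator (space (PiM L M)) z \<partial>PiM L M)"
          by (rule nn_integral_cong) simp
        also have "\<dots> = emeasure (density (PiM L M) q) (space (PiM L M))"
          by (rule emeasure_density[symmetric]) simp_all
        also have "\<dots> = emeasure (distr P (PiM L M) (\<lambda>x. restrict x L)) (space (PiM L M))"
          by (simp add: marg)
        also have "\<dots> = emeasure P ((\<lambda>x. restrict x L) -` space (PiM L M) \<inter> space P)"
          by (rule emeasure_distr) (simp_all add: Pd)
        also have "(\<lambda>x. restrict x L) -` space (PiM L M) \<inter> space P = space P"
          using measurable_space[OF rL] spP by auto
        finally show ?thesis using P1 by simp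
      qed
      have injL: "inj_on ord L" using inj LN by (rule inj_on_subset)
      obtain k'' where kf'': "\<forall>s\<in>L. kernel_function M E2 s (k'' s)"
        and dL: "density (PiM L M) q = density (PiM L M) (\<lambda>x. \<Prod>s\<in>L. ennreal (k'' s (x s) (restrict x (pa E2 s))))"
        using chain_rule[OF psf finL(1) injL phiL paL2 qm q1] by blast
      define knew where "knew s = (if s \<in> L then k'' s else k' s)" for s
      define g where "g z y = (\<Prod>s\<in>R. ennreal (k' s (y s) (restrict (merge L R (z, y)) (pa E' s))))" for z y
      define F where "F z = (\<Prod>s\<in>L. ennreal (k'' s (z s) (restrict z (pa E2 s))))" for z
      define h where "h x = (\<Prod>s\<in>N. ennreal (knew s (x s) (restrict x (pa E2 s))))" for x
      have kfnew: "\<forall>s\<in>N. kernel_function M E2 s (knew s)"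
      proof
        fix s assume s: "s \<in> N"
        show "kernel_function M E2 s (knew s)"
        proof (cases "s \<in> L")
          case True then show ?thesis using kf'' by (simp add: knew_def)
        next
          case False
          then have sR: "s \<in> R" using s by (simp add: R_def)
          have "kernel_function M E' s (k' s)" using kf' sR by blast
          then have "kernel_function M E2 s (k' s)" using kf_cong[OF paR2[OF sR]] by blast
          then show ?thesis using False by (simp add: knew_def)
        qed
      qed
      have hm[measurable]: "h \<in> borel_measurable (PiM N M)"
        unfolding h_def by (rule prod_kernel_meas[OF finN kfnew _ _ measurable_ident_sets[OF refl]]) (use E2N in \<open>auto simp: pa_def\<close>)
      have Fm[measurable]: "F \<in> borel_measurable (PiM L M)"
        unfolding F_def by (rule prod_kernel_meas[OF finL(1) kf'' _ _ measurable_ident_sets[OF refl]]) (use paL2 in auto)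
      have pa'N: "\<forall>s\<in>R. pa E' s \<subseteq> L \<union> R" using E'N U by (auto simp: pa_def)
      have gm[measurable]: "(\<lambda>(z, y). g z y) \<in> borel_measurable (PiM L M \<Otimes>\<^sub>M PiM R M)"
        unfolding g_def by (rule g_meas[OF finL(2) disj kf' pa'N])
      have gz[measurable]: "g z \<in> borel_measurable (PiM R M)" if "z \<in> space (PiM L M)" for z
        using measurable_compose[OF measurable_Pair1'[OF that] gm] by simp
      have hsplit: "h (merge L R (z, y)) = F z * g z y" for z y
      proof -
        have "h (merge L R (z, y)) = (\<Prod>s\<in>L. ennreal (knew s (merge L R (z, y) s) (restrict (merge L R (z, y)) (pa E2 s)))) *
               (\<Prod>s\<in>R. ennreal (knew s (merge L R (z, y) s) (restrict (merge L R (z, y)) (pa E2 s))))"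
          unfolding h_def U[symmetric] by (rule prod.union_disjoint[OF finL disj])
        also have "(\<Prod>s\<in>L. ennreal (knew s (merge L R (z, y) s) (restrict (merge L R (z, y)) (pa E2 s)))) = F z"
          unfolding F_def
        proof (rule prod.cong[OF refl])
          fix s assume s: "s \<in> L"
          have "pa E2 s \<subseteq> L" using paL2 s by auto
          then show "ennreal (knew s (merge L R (z, y) s) (restrict (merge L R (z, y)) (pa E2 s))) =
                ennreal (k'' s (z s) (restrict z (pa E2 s)))"
            using s disj by (simp add: knew_def merge_L restrict_merge_sub)
        qed
        also have "(\<Prod>s\<in>R. ennreal (knew s (merge L R (z, y) s) (restrict (merge L R (z, y)) (pa E2 s)))) = g z y"
          unfolding g_def
        proof (rule prod.cong[OF refl])
          fix s assume s: "s \<in> R"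
          then have "s \<notin> L" using disj by blast
          then show "ennreal (knew s (merge L R (z, y) s) (restrict (merge L R (z, y)) (pa E2 s))) =
                ennreal (k' s (y s) (restrict (merge L R (z, y)) (pa E' s)))"
            using s paR2[OF s] by (simp add: knew_def merge_R)
        qed
        finally show ?thesis .
      qed
      have Kem: "emeasure (K z) B = (\<integral>\<^sup>+y. g z y * indicator B y \<partial>PiM R M)"
        if "z \<in> space (PiM L M)" "B \<in> sets (PiM R M)" for z B
      proof -
        have "K z = density (PiM R M) (g z)" using Kd that(1) by (simp add: g_def[abs_def])
        then show ?thesis using emeasure_density[OF gz[OF that(1)] that(2)] by simp
      qed
      have Kemm: "(\<lambda>z. emeasure (K z) B) \<in> borel_measurable (PiM L M)" if B: "B \<in> sets (PiM R M)" for B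
        using measurable_compose[OF measurable_prob_algebraD[OF Kmeas] measurable_emeasure_subprob_algebra[OF B]] .
      have rR[measurable]: "(\<lambda>x. restrict x R) \<in> PiM N M \<rightarrow>\<^sub>M PiM R M" using U by (intro measurable_restrict_subset) auto
      have Peq: "P = density (PiM N M) h"
      proof (rule measure_eqI_PiM_finite[OF finN])
        show "sets P = sets (PiM N M)" using Pd by simp
        show "sets (density (PiM N M) h) = sets (PiM N M)" by simp
        show "range (\<lambda>i::nat. space (PiM N M)) \<subseteq> prod_algebra N M"
          using prod_algebraI_finite[OF finN, of "\<lambda>i. space (M i)" M] by (auto simp: space_PiM)
        show "(\<Union>i::nat. space (PiM N M)) = space (PiM N M)" by simp
        show "emeasure P (space (PiM N M)) \<noteq> \<infinity>" for i :: nat using P1 spP by simp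
        fix A assume A: "\<And>i. i \<in> N \<Longrightarrow> A i \<in> sets (M i)"
        define B where "B = Pi\<^sub>E R A"
        define C where "C = Pi\<^sub>E L A"
        have B[measurable]: "B \<in> sets (PiM R M)" unfolding B_def using A U by (intro sets_PiM_I_finite finL) auto
        have C[measurable]: "C \<in> sets (PiM L M)" unfolding C_def using A U by (intro sets_PiM_I_finite finL) auto
        have Asp: "A i \<subseteq> space (M i)" if "i \<in> N" for i using sets.sets_into_space[OF A[OF that]] .
        have boxeq: "Pi\<^sub>E N A = {x \<in> space P. restrict x R \<in> B \<and> restrict x L \<in> C}"
        proof (intro set_eqI iffI)
          fix x assume x: "x \<in> Pi\<^sub>E N A"
          then have "x \<in> space (PiM N M)" using Asp by (auto simp: space_PiM PiE_iff)
          moreover have "restrict x R \<in> B" using x U by (auto simp: B_def PiE_iff)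
          moreover have "restrict x L \<in> C" using x U by (auto simp: C_def PiE_iff)
          ultimately show "x \<in> {x \<in> space P. restrict x R \<in> B \<and> restrict x L \<in> C}" using spP by simp
        next
          fix x assume x: "x \<in> {x \<in> space P. restrict x R \<in> B \<and> restrict x L \<in> C}"
          then have xs: "x \<in> space (PiM N M)" and xR: "restrict x R \<in> B" and xL: "restrict x L \<in> C"
            using spP by auto
          have "x i \<in> A i" if "i \<in> N" for i
          proof (cases "i \<in> L")
            case True then show ?thesis using xL by (auto simp: C_def PiE_iff)
          next
            case False then have "i \<in> R" using that by (simp add: R_def)
            then show ?thesis using xR by (auto simp: B_def PiE_iff)
          qed
          moreover have "x \<in> extensional N" using xs by (auto simp: space_PiM PiE_iff)
          ultimately show "x \<in> Pi\<^sub>E N A" by (auto simp: PiE_iff)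
        qed
        have S[measurable]: "Pi\<^sub>E N A \<in> sets (PiM N M)" using A finN by (intro sets_PiM_I_finite) auto
        have fm2: "(\<lambda>x. h x * indicator (Pi\<^sub>E N A) x) \<in> borel_measurable (PiM (L \<union> R) M)"
          unfolding U by measurable
        have Ki: "(\<lambda>z. emeasure (K z) B * indicator C z) \<in> borel_measurable (PiM L M)"
          using Kemm[OF B] by measurable
        have "emeasure P (Pi\<^sub>E N A) = (\<integral>\<^sup>+xA\<in>C. emeasure (K xA) B \<partial>distr P (PiM L M) (\<lambda>x. restrict x L))"
          unfolding boxeq using ver B C unfolding version_of_conditional_def R_def by blast
        also have "\<dots> = (\<integral>\<^sup>+z. emeasure (K z) B * indicator C z \<partial>density (PiM L M) F)"
          unfolding marg dL F_def ..
        also have "\<dots> = (\<integral>\<^sup>+z. F z * (emeasure (K z) B * indicator C z) \<partial>PiM L M)"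
          by (rule nn_integral_density[OF Fm Ki])
        also have "\<dots> = (\<integral>\<^sup>+z. (\<integral>\<^sup>+y. h (merge L R (z, y)) * indicator (Pi\<^sub>E N A) (merge L R (z, y)) \<partial>PiM R M) \<partial>PiM L M)"
        proof (rule nn_integral_cong)
          fix z assume z: "z \<in> space (PiM L M)"
          have "(\<integral>\<^sup>+y. h (merge L R (z, y)) * indicator (Pi\<^sub>E N A) (merge L R (z, y)) \<partial>PiM R M)
              = (\<integral>\<^sup>+y. (F z * indicator C z) * (g z y * indicator B y) \<partial>PiM R M)"
          proof (rule nn_integral_cong)
            fix y assume y: "y \<in> space (PiM R M)"
            have mN: "merge L R (z, y) \<in> space (PiM N M)"
              using z y measurable_space[OF measurable_merge, of "(z, y)" L M R] U by (simp add: space_pair_measure)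
            have "restrict (merge L R (z, y)) R = y" using disj restrict_space_id[OF y] by simp
            moreover have "restrict (merge L R (z, y)) L = z" using disj restrict_space_id[OF z] by simp
            ultimately have "indicator (Pi\<^sub>E N A) (merge L R (z, y)) = (indicator C z * indicator B y :: ennreal)"
              using mN unfolding boxeq by (auto simp: spP indicator_def)
            then show "h (merge L R (z, y)) * indicator (Pi\<^sub>E N A) (merge L R (z, y)) = (F z * indicator C z) * (g z y * indicator B y)"
              using hsplit by (simp add: mult_ac)
          qed
          also have "\<dots> = (F z * indicator C z) * emeasure (K z) B"
            using z by (simp add: nn_integral_cmult Kem[OF z B])
          finally show "F z * (emeasure (K z) B * indicator C z) = (\<integral>\<^sup>+y. h (merge L R (z, y)) * indicator (Pi\<^sub>E N A) (merge L R (z, y)) \<partial>PiM R M)"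
            by (simp add: mult_ac)
        qed
        also have "\<dots> = (\<integral>\<^sup>+x. h x * indicator (Pi\<^sub>E N A) x \<partial>PiM N M)"
          using product_nn_integral_fold[OF disj finL fm2] by (simp only: U)
        also have "\<dots> = emeasure (density (PiM N M) h) (Pi\<^sub>E N A)"
          by (rule emeasure_density[OF hm S, symmetric])
        finally show "emeasure P (Pi\<^sub>E N A) = emeasure (density (PiM N M) h) (Pi\<^sub>E N A)" .
      qed
      show "P \<in> PG N E2 M"
      proof -
        have "P = density (PiM N M) (\<lambda>x. \<Prod>s\<in>N. ennreal (knew s (x s) (restrict x (pa E2 s))))"
          using Peq by (simp add: h_def[abs_def])
        then show ?thesis unfolding PG_def using Pp kfnew by blast
      qed
    qed
  qed
  then show ?thesis unfolding E2_def .
qed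

lemma PiM_eqN: "X \<subseteq> N \<Longrightarrow> \<forall>i\<in>N. M i = M' i \<Longrightarrow> PiM X M = PiM X M'"
  by (rule PiM_cong) auto

lemma kf_eqN: "s \<in> N \<Longrightarrow> pa E s \<subseteq> N \<Longrightarrow> \<forall>i\<in>N. M i = M' i \<Longrightarrow>
    kernel_function M E s k = kernel_function M' E s k"
  unfolding kernel_function_def using PiM_eqN[of "pa E s" N M M'] by simp

lemma PG_eqN:
  assumes "\<forall>s\<in>N. pa E s \<subseteq> N" "\<forall>i\<in>N. M i = M' i"
  shows "PG N E M = PG N E M'"
proof -
  have "\<And>k. (\<forall>s\<in>N. kernel_function M E s (k s)) = (\<forall>s\<in>N. kernel_function M' E s (k s))"
    by (intro ball_cong refl kf_eqN) (use assms in auto)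
  moreover have "PiM N M = PiM N M'" using PiM_eqN[of N N M M'] assms by simp
  ultimately show ?thesis unfolding PG_def by simp
qed

lemma KG_eqN:
  assumes "\<forall>s\<in>N. pa E s \<subseteq> N" "\<forall>i\<in>N. M i = M' i" "A \<subseteq> N"
  shows "KG N E M A = KG N E M' A"
proof -
  have "\<And>k. (\<forall>s\<in>N - A. kernel_function M E s (k s)) = (\<forall>s\<in>N - A. kernel_function M' E s (k s))"
    by (intro ball_cong refl kf_eqN) (use assms in auto)
  moreover have "PiM (N - A) M = PiM (N - A) M'" using PiM_eqN[of "N - A" N M M'] assms by auto
  moreover have "PiM A M = PiM A M'" using PiM_eqN[of A N M M'] assms by auto
  ultimately show ?thesis unfolding KG_def by simp
qed

lemma ver_eqN:
  assumes "\<forall>i\<in>N. M i = M' i" "A \<subseteq> N"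
  shows "version_of_conditional N M A P K = version_of_conditional N M' A P K"
proof -
  have "PiM (N - A) M = PiM (N - A) M'" using PiM_eqN[of "N - A" N M M'] assms by auto
  moreover have "PiM A M = PiM A M'" using PiM_eqN[of A N M M'] assms by auto
  ultimately show ?thesis unfolding version_of_conditional_def by simp
qed

lemma goalI_eqN:
  assumes "\<forall>s\<in>N. pa E s \<subseteq> N" "\<forall>i\<in>N. M i = M' i"
  shows "goal_I N E M E' = goal_I N E M' E'"
proof (cases "is_dag N E'")
  case True
  then have "\<forall>s\<in>N. pa E' s \<subseteq> N" by (auto simp: is_dag_def pa_def)
  moreover have "leaves N E \<subseteq> N" by (auto simp: leaves_def)
  ultimately show ?thesis unfolding goal_I_def
    using PG_eqN[OF assms] KG_eqN[OF _ assms(2), of E' "leaves N E"] ver_eqN[OF assms(2), of "leaves N E"]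
    by simp
next
  case False then show ?thesis by (simp add: goal_I_def)
qed

lemma goalII_eqN:
  assumes "\<forall>s\<in>N. pa E s \<subseteq> N" "\<forall>i\<in>N. M i = M' i"
  shows "goal_II N E M E' = goal_II N E M' E'"
proof (cases "is_dag N E'")
  case True
  then have "\<forall>s\<in>N. pa E' s \<subseteq> N" by (auto simp: is_dag_def pa_def)
  then show ?thesis unfolding goal_II_def
    using PG_eqN[OF assms] PG_eqN[OF _ assms(2), of E'] by simp
next
  case False then show ?thesis by (simp add: goal_II_def)
qed

lemma std_sigma_finite: "std_space Ms \<Longrightarrow> sigma_finite_measure Ms"
  unfolding std_space_def
proof (elim disjE exE conjE)
  fix F assume "finite F" "Ms = count_space F"
  then show "sigma_finite_measure Ms"
    using finite_measure_count_space[of F] by (simp add: finite_measure_def)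
next
  fix d :: nat assume "Ms = PiM {..<d} (\<lambda>_. lborel)"
  moreover have "product_sigma_finite (\<lambda>_::nat. lborel :: real measure)"
    by standard
  ultimately show "sigma_finite_measure Ms"
    using product_sigma_finite.sigma_finite[of "\<lambda>_. lborel" "{..<d}"] by simp
qed

lemma std_density:
  assumes "std_space Ms" "space Ms \<noteq> {}"
  shows "\<exists>\<phi>. \<phi> \<in> borel_measurable Ms \<and> (\<forall>x. 0 \<le> \<phi> x) \<and> (\<integral>\<^sup>+x. ennreal (\<phi> x) \<partial>Ms) = 1"
  using assms(1) unfolding std_space_def
proof (elim disjE exE conjE)
  fix F assume F: "finite F" "Ms = count_space F"
  then obtain a where a: "a \<in> F" using assms(2) by auto
  have "(\<integral>\<^sup>+x. ennreal (indicator {a} x) \<partial>count_space F) = (\<integral>\<^sup>+x. indicator {a} x \<partial>count_space F)"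
    by (simp only: ennreal_indicator)
  also have "\<dots> = emeasure (count_space F) {a}"
    by (rule nn_integral_indicator) (use a in auto)
  also have "\<dots> = 1" using a by (subst emeasure_count_space_finite) auto
  finally have "(\<integral>\<^sup>+x. ennreal (indicator {a} x) \<partial>count_space F) = 1" .
  then show ?thesis using F by (intro exI[of _ "indicator {a}"]) auto
next
  fix d :: nat assume d: "Ms = PiM {..<d} (\<lambda>_. lborel)"
  interpret product_sigma_finite "\<lambda>_::nat. lborel :: real measure"
    by standard
  define Q where "Q = (\<Pi>\<^sub>E i\<in>{..<d}. {0..1::real})"
  have Q: "Q \<in> sets (PiM {..<d} (\<lambda>_. lborel))" unfolding Q_def by (intro sets_PiM_I_finite) auto
  have em1: "emeasure (PiM {..<d} (\<lambda>_. lborel)) Q = 1"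
    unfolding Q_def by (subst emeasure_PiM) auto
  then have "(\<integral>\<^sup>+x. ennreal (indicator Q x) \<partial>PiM {..<d} (\<lambda>_. lborel)) = 1"
    by (simp only: ennreal_indicator nn_integral_indicator[OF Q] em1)
  then show ?thesis using d Q by (intro exI[of _ "indicator Q"]) auto
qed

theorem proposition1:
  fixes N :: "'n set" and E :: "('n \<times> 'n) set" and M :: "'n \<Rightarrow> (nat \<Rightarrow> real) measure"
  assumes "is_dag N E"
    and "\<forall>s\<in>N. std_space (M s)"
  shows "(\<forall>E' ord. goal_I N E M E' \<and> topological_ordering N E' ord \<longrightarrow>
            goal_II N E M (E' \<union> {(s, t). s \<in> leaves N E \<and> t \<in> leaves N E \<and> ord s < ord t}))
       \<and> (\<forall>E'. goal_II N E M E' \<longrightarrow>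
            goal_I N E M (E' - {(s, t). (s, t) \<in> E' \<and> s \<in> leaves N E \<and> t \<in> leaves N E}))"
proof -
  define M' where "M' i = (if i \<in> N then M i else count_space {})" for i
  have eqM: "\<forall>i\<in>N. M i = M' i" by (simp add: M'_def)
  have EN: "\<forall>s\<in>N. pa E s \<subseteq> N" using assms(1) by (auto simp: is_dag_def pa_def)
  have psf: "product_sigma_finite M'"
    unfolding product_sigma_finite_def
  proof
    fix i
    show "sigma_finite_measure (M' i)"
    proof (cases "i \<in> N")
      case True then show ?thesis using std_sigma_finite assms(2) by (simp add: M'_def)
    next
      case False
      have "sigma_finite_measure (count_space {})"
        using finite_measure_count_space[OF finite.emptyI] unfolding finite_measure_def by (rule conjunct1)
      with False show ?thesis by (simp add: M'_def)
    qed
  qed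
  have phi: "\<forall>s\<in>N. space (M' s) \<noteq> {} \<longrightarrow> (\<exists>\<phi>. \<phi> \<in> borel_measurable (M' s) \<and> (\<forall>x. 0 \<le> \<phi> x) \<and> (\<integral>\<^sup>+x. ennreal (\<phi> x) \<partial>M' s) = 1)"
    using std_density assms(2) by (simp add: M'_def)
  show ?thesis
  proof (intro conjI allI impI)
    fix E' and ord :: "'n \<Rightarrow> nat"
    assume h: "goal_I N E M E' \<and> topological_ordering N E' ord"
    then have "goal_I N E M' E'" using goalI_eqN[OF EN eqM] by simp
    then have "goal_II N E M' (E' \<union> {(s, t). s \<in> leaves N E \<and> t \<in> leaves N E \<and> ord s < ord t})"
      using part_a[OF psf assms(1) phi _ conjunct2[OF h]] by blast
    then show "goal_II N E M (E' \<union> {(s, t). s \<in> leaves N E \<and> t \<in> leaves N E \<and> ord s < ord t})"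
      using goalII_eqN[OF EN eqM] by simp
  next
    fix E' assume "goal_II N E M E'"
    then have "goal_II N E M' E'" using goalII_eqN[OF EN eqM] by simp
    then have "goal_I N E M' (E' - {(s, t). (s, t) \<in> E' \<and> s \<in> leaves N E \<and> t \<in> leaves N E})"
      by (rule part_b[OF psf assms(1)])
    then show "goal_I N E M (E' - {(s, t). (s, t) \<in> E' \<and> s \<in> leaves N E \<and> t \<in> leaves N E})"
      using goalI_eqN[OF EN eqM] by simp
  qed
qed

end
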